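(* Let $w_0,w_1$ be finite words in the alphabet $\{0,1\}$ which both start with $10$. Then $R(w_0\cdot w_1)=R(w_0)\cdot R(w_1)$, where $\cdot$ denotes concatenation.
   Context: For $k\ge1$ set $\sigma(0^k)=0^k$, $\sigma(1^{2k})=(12)^k$, $\sigma(1^{2k-1})=2(12)^{k-1}$. Let $\Sigma_1\subseteq\{0,1\}^{\mathbb{N}}$ be the set of sequences that are eventually constantly $1$. The recoding map $R:\{0,1\}^{\mathbb{N}}\setminus\Sigma_1\to\{0,1,2\}^{\mathbb{N}}$ is defined by writing $\mathbf{a}=1^{a_0}0^{a_1}1^{a_2}0^{a_3}\cdots$ with $a_0\ge0$ and $a_i\ge1$ for $i\ge1$ (maximal blocks) and setting $R(\mathbf{a})=\sigma(1^{a_0})\sigma(0^{a_1})\sigma(1^{a_2})\sigma(0^{a_3})\cdots$ (with $\sigma(1^0)$ the empty word). For a finite word $w=a_1\cdots a_m\in\{0,1\}^m$ with $w\ne1^m$, write $R(w^\infty)=b_1b_2\cdots$ and define $R(w):=b_1\cdots b_m$. *)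

theory Defs
  imports Main
begin

text \<open>The recoding map is defined block by block:
  a position n carrying a 0 lies in a block of 0s and is mapped to 0 (sigma(0^k)=0^k);
  a position carrying a 1 lies in a maximal block 1^L, at offset j (0-based),
  and is mapped to the j-th letter of sigma(1^L).\<close>

definition sigma_one :: "nat \<Rightarrow> nat list" where
  "sigma_one L = (if even L then concat (replicate (L div 2) [1, 2])
                  else 2 # concat (replicate ((L - 1) div 2) [1, 2]))"

definition ones_before :: "(nat \<Rightarrow> nat) \<Rightarrow> nat \<Rightarrow> nat" where
  "ones_before a n = (LEAST k. k = n \<or> a (n - Suc k) \<noteq> 1)"

text \<open>number of consecutive 1s starting at position n (finite if a is not eventually 1)\<close>
definition ones_from :: "(nat \<Rightarrow> nat) \<Rightarrow> nat \<Rightarrow> nat" where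
  "ones_from a n = (LEAST k. a (n + k) \<noteq> 1)"

definition Rseq :: "(nat \<Rightarrow> nat) \<Rightarrow> (nat \<Rightarrow> nat)" where
  "Rseq a n = (if a n = 0 then 0
               else sigma_one (ones_before a n + ones_from a n) ! ones_before a n)"

definition per :: "nat list \<Rightarrow> (nat \<Rightarrow> nat)" where
  "per w = (\<lambda>n. w ! (n mod length w))"

definition Rword :: "nat list \<Rightarrow> nat list" where
  "Rword w = map (Rseq (per w)) [0..<length w]"

end

theory Submission
  imports Defs
begin

lemma least_cong_bounded:
  fixes P Q :: "nat \<Rightarrow> bool"
  assumes "P K" and "\<And>k. k \<le> K \<Longrightarrow> P k \<longleftrightarrow> Q k"
  shows "Least P = Least Q"
proof -
  have qK: "Q K" using assms by auto
  have lp: "Least P \<le> K" using assms(1) by (rule Least_le)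
  have lq: "Least Q \<le> K" using qK by (rule Least_le)
  have pl: "P (Least P)" using assms(1) by (rule LeastI)
  have ql: "Q (Least Q)" using qK by (rule LeastI)
  have "Q (Least P)" using pl lp assms(2) by blast
  hence 1: "Least Q \<le> Least P" by (rule Least_le)
  have "P (Least Q)" using ql lq assms(2) by blast
  hence 2: "Least P \<le> Least Q" by (rule Least_le)
  show ?thesis using 1 2 by simp
qed

lemma Rseq_eq:
  assumes "a n = b m" "ones_before a n = ones_before b m" "ones_from a n = ones_from b m"
  shows "Rseq a n = Rseq b m"
  using assms unfolding Rseq_def by simp

lemma ob_prefix:
  assumes "\<And>i. i < n \<Longrightarrow> a i = b i"
  shows "ones_before a n = ones_before b n"
  unfolding ones_before_def
proof (rule least_cong_bounded[where K = n])
  fix k assume "k \<le> n"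
  show "(k = n \<or> a (n - Suc k) \<noteq> 1) = (k = n \<or> b (n - Suc k) \<noteq> 1)"
    using assms[of "n - Suc k"] \<open>k \<le> n\<close> by (cases "k = n") auto
qed simp

lemma ob_shift:
  assumes "K < n" "K < m" "a (n - Suc K) \<noteq> 1"
    and "\<And>k. k \<le> K \<Longrightarrow> a (n - Suc k) = b (m - Suc k)"
  shows "ones_before a n = ones_before b m"
  unfolding ones_before_def
proof (rule least_cong_bounded[where K = K])
  fix k assume "k \<le> K"
  thus "(k = n \<or> a (n - Suc k) \<noteq> 1) = (k = m \<or> b (m - Suc k) \<noteq> 1)"
    using assms by auto
qed (use assms in auto)

lemma of_shift:
  assumes "a (n + K) \<noteq> 1"
    and "\<And>k. k \<le> K \<Longrightarrow> a (n + k) = b (m + k)"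
  shows "ones_from a n = ones_from b m"
  unfolding ones_from_def
  by (rule least_cong_bounded[where K = K]) (use assms in auto)

lemma concat12_nth:
  "i < 2 * k \<Longrightarrow> concat (replicate k [1::nat, 2]) ! i = (if even i then 1 else 2)"
proof (induction k arbitrary: i)
  case 0 then show ?case by simp
next
  case (Suc k)
  show ?case
  proof (cases "i < 2")
    case True then show ?thesis by (cases i) (auto simp: nth_Cons split: nat.splits)
  next
    case False
    then obtain j where j: "i = Suc (Suc j)" by (metis add_2_eq_Suc le_add_diff_inverse not_less)
    have "j < 2 * k" using Suc.prems j by simp
    then show ?thesis using Suc.IH[of j] j by simp
  qed
qed

lemma sigma_last: "sigma_one (Suc t) ! t = 2"
proof (cases "even t")
  case True
  show ?thesis
  proof (cases t)
    case 0 then show ?thesis by (simp add: sigma_one_def)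
  next
    case (Suc s)
    have "odd s" using True Suc by simp
    have "s < 2 * (t div 2)" using True Suc by presburger
    then show ?thesis using Suc True \<open>odd s\<close> concat12_nth[of s "t div 2"]
      by (simp add: sigma_one_def)
  qed
next
  case False
  have "t < 2 * (Suc t div 2)" using False by presburger
  then show ?thesis using False concat12_nth[of t "Suc t div 2"]
    by (simp add: sigma_one_def)
qed

lemma start10: "take 2 w = [1, 0] \<Longrightarrow> \<exists>r. w = 1 # 0 # r"
  by (cases w; cases "tl w") auto

theorem lemma8p7:
  fixes w0 w1 :: "nat list"
  assumes "set w0 \<subseteq> {0, 1}" and "set w1 \<subseteq> {0, 1}"
    and "take 2 w0 = [1, 0]" and "take 2 w1 = [1, 0]"
  shows "Rword (w0 @ w1) = Rword w0 @ Rword w1"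
proof -
  obtain r0 where r0: "w0 = 1 # 0 # r0" using start10[OF assms(3)] by blast
  obtain r1 where r1: "w1 = 1 # 0 # r1" using start10[OF assms(4)] by blast
  define p where "p = length w0"
  define q where "q = length w1"
  define a where "a = per (w0 @ w1)"
  define a0 where "a0 = per w0"
  define a1 where "a1 = per w1"
  have w01: "w1 ! 0 = 1" "w1 ! 1 = 0" "w0 ! 0 = 1" "w0 ! 1 = 0" using r0 r1 by auto
  have p2: "p \<ge> 2" and q2: "q \<ge> 2" using r0 r1 p_def q_def by auto
  have len: "length (w0 @ w1) = p + q" using p_def q_def by simp
  have m0: "(p + q) mod (p + q) = 0" by simp
  have m1: "(p + q + 1) mod (p + q) = 1" using p2 by (simp add: mod_Suc)
  have m0': "p mod p = 0" by simp
  have m1': "(p + 1) mod p = 1" using p2 by (simp add: mod_Suc)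
  have m0'': "q mod q = 0" by simp
  have m1'': "(q + 1) mod q = 1" using q2 by (simp add: mod_Suc)
  have A1: "a j = w0 ! j" if "j < p" for j
    using that unfolding a_def per_def len by (simp add: nth_append p_def)
  have A2: "a (p + i) = w1 ! i" if "i < q" for i
    using that unfolding a_def per_def len by (simp add: nth_append p_def)
  have A3: "a (p + q) = 1" unfolding a_def per_def len m0 using w01 p2
    by (simp add: nth_append p_def)
  have A4: "a (p + q + 1) = 0" unfolding a_def per_def len m1 using w01 p2
    by (simp add: nth_append p_def)
  have B1: "a0 j = w0 ! j" if "j < p" for j
    using that unfolding a0_def per_def p_def by simp
  have B2: "a0 p = 1" "a0 (p + 1) = 0" unfolding a0_def per_def p_def[symmetric] m0' m1'
    using w01 by auto
  have C1: "a1 j = w1 ! j" if "j < q" for j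
    using that unfolding a1_def per_def q_def by simp
  have C2: "a1 q = 1" "a1 (q + 1) = 0" unfolding a1_def per_def q_def[symmetric] m0'' m1''
    using w01 by auto
  have part0: "Rseq a n = Rseq a0 n" if np: "n < p" for n
  proof (rule Rseq_eq)
    show "a n = a0 n" using A1 B1 that by simp
    show "ones_before a n = ones_before a0 n"
      by (rule ob_prefix) (use A1 B1 that in simp)
    show "ones_from a n = ones_from a0 n"
    proof (rule of_shift[where K = "p + 1 - n"])
      show "a (n + (p + 1 - n)) \<noteq> 1"
        using A2[of 1] q2 w01 that by (simp add: add.commute)
      fix k assume k: "k \<le> p + 1 - n"
      show "a (n + k) = a0 (n + k)"
      proof -
        consider "n + k < p" | "n + k = p" | "n + k = p + 1" using k np by linarith
        then show ?thesis
        proof cases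
          case 1 then show ?thesis using A1 B1 by simp
        next
          case 2 then show ?thesis using A2[of 0] q2 B2 w01 by simp
        next
          case 3 then show ?thesis using A2[of 1] q2 B2 w01 by simp
        qed
      qed
    qed
  qed
  have part1: "Rseq a (p + i) = Rseq a1 i" if iq: "i < q" for i
  proof -
    consider "i = 0" | "i = 1" | "i \<ge> 2" by linarith
    then show ?thesis
    proof cases
      case 1
      have af: "ones_from a p = 1" unfolding ones_from_def
        by (rule Least_equality) (use A2[of 0] A2[of 1] q2 w01 in \<open>auto simp: not_less_eq_eq[symmetric]\<close>, metis add.right_neutral neq0_conv)
      have a1f: "ones_from a1 0 = 1" unfolding ones_from_def
      proof (rule Least_equality)
        show "a1 (0 + 1) \<noteq> 1" using C1[of 1] q2 w01 by simp
        fix y assume "a1 (0 + y) \<noteq> 1"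
        then show "1 \<le> y" using C1[of 0] q2 w01 by (cases y) auto
      qed
      have a1b: "ones_before a1 0 = 0" unfolding ones_before_def
        by (rule Least_equality) auto
      have "Rseq a p = 2" using A2[of 0] q2 w01 af sigma_last[of "ones_before a p"]
        unfolding Rseq_def by simp
      moreover have "Rseq a1 0 = 2" using C1[of 0] q2 w01 a1f a1b sigma_last[of 0]
        unfolding Rseq_def by simp
      ultimately show ?thesis using 1 by simp
    next
      case 2
      then show ?thesis using A2[of 1] C1[of 1] q2 w01 unfolding Rseq_def by simp
    next
      case 3
      show ?thesis
      proof (rule Rseq_eq)
        show "a (p + i) = a1 i" using A2 C1 that by simp
        show "ones_before a (p + i) = ones_before a1 i"
        proof (rule ob_shift[where K = "i - 2"])
          show "i - 2 < p + i" "i - 2 < i" using 3 by auto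
          show "a (p + i - Suc (i - 2)) \<noteq> 1"
            using 3 A2[of 1] q2 w01 by (simp add: Suc_diff_Suc numeral_2_eq_2)
          fix k assume k: "k \<le> i - 2"
          have e1: "p + i - Suc k = p + (i - Suc k)" using k 3 by simp
          show "a (p + i - Suc k) = a1 (i - Suc k)"
            unfolding e1 using A2 C1 that by simp
        qed
        show "ones_from a (p + i) = ones_from a1 i"
        proof (rule of_shift[where K = "q + 1 - i"])
          show "a (p + i + (q + 1 - i)) \<noteq> 1" using A4 that by simp
          fix k assume k: "k \<le> q + 1 - i"
          consider "i + k < q" | "i + k = q" | "i + k = q + 1" using k iq by linarith
          then show "a (p + i + k) = a1 (i + k)"
          proof cases
            case 1 then show ?thesis using A2 C1 by (simp add: add.assoc)
          next
            case 2 then show ?thesis using A3 C2 by (simp add: add.assoc)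
          next
            case 3 then show ?thesis using A4 C2 by (simp add: add.assoc)
          qed
        qed
      qed
    qed
  qed
  have "Rword (w0 @ w1) = map (Rseq a) [0..<p] @ map (Rseq a) [p..<p+q]"
    unfolding Rword_def a_def[symmetric] len using upt_add_eq_append[of 0 p q] by simp
  also have "map (Rseq a) [0..<p] = Rword w0"
    unfolding Rword_def a0_def[symmetric] p_def[symmetric] using part0 by simp
  also have "map (Rseq a) [p..<p+q] = map (\<lambda>i. Rseq a (p + i)) [0..<q]"
  proof -
    have "[p..<p+q] = map (\<lambda>i. i + p) [0..<q]" using map_add_upt[of p q] by (simp add: add.commute)
    then show ?thesis by (simp add: add.commute)
  qed
  also have "\<dots> = Rword w1"
    unfolding Rword_def a1_def[symmetric] q_def[symmetric] using part1 by simp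
  finally show ?thesis .
qed

end
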